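(* Let $\mathcal{I}$ be an interval hypergraph on $[n]$ and $A$ an acyclic orientation of $\mathcal{I}$. (1) Let $B$ be an orientation obtained from $A$ by an increasing flip with respect to $i<j$, and let $k=\max\{\max(I): I\in\mathcal{I},\ A(I)=i\}$. Then $B$ is acyclic if and only if there is no $J\in\mathcal{I}$ with $j\in J\setminus\{A(J)\}$ and $A(J)\in\,]i,k]$. (2) Symmetrically, let $B$ be an orientation obtained from $A$ by a decreasing flip with respect to $j<i$, and let $k=\min\{\min(I): I\in\mathcal{I},\ A(I)=i\}$. Then $B$ is acyclic if and only if there is no $J\in\mathcal{I}$ with $j\in J\setminus\{A(J)\}$ and $A(J)\in[k,i[$.
   Context: An interval hypergraph $\mathcal{I}$ on $[n]$ is a collection of intervals of $[n]$ containing all singletons. An orientation is a map $O:\mathcal{I}\to[n]$ with $O(I)\in I$; it is acyclic if there are no $H_1,\dots,H_k$, $k\ge2$, with $O(H_{i+1})\in H_i\setminus\{O(H_i)\}$ for $i\in[k-1]$ and $O(H_1)\in H_k\setminus\{O(H_k)\}$. For distinct $i,j\in[n]$, an orientation $O'\neq O$ is obtained from $O$ by a flip of $i$ to $j$ if for all $H\in\mathcal{I}$: if $O(H)\ne O'(H)$ then $O(H)=i$ and $O'(H)=j$; and if $\{i,j\}\subseteq H$ then $O(H)=i\iff O'(H)=j$. The flip is increasing if $i<j$ and decreasing if $i>j$. Here $]a,b]=\{a+1,\dots,b\}$ and $[a,b[=\{a,\dots,b-1\}$. *)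

theory Defs
  imports Main
begin

definition is_interval :: "nat \<Rightarrow> nat set \<Rightarrow> bool" where
  "is_interval n I \<longleftrightarrow> (\<exists>a b. 1 \<le> a \<and> a \<le> b \<and> b \<le> n \<and> I = {a..b})"

definition interval_hypergraph :: "nat \<Rightarrow> nat set set \<Rightarrow> bool" where
  "interval_hypergraph n \<I> \<longleftrightarrow>
     (\<forall>I\<in>\<I>. is_interval n I) \<and> (\<forall>x\<in>{1..n}. {x} \<in> \<I>)"

definition orientation :: "nat set set \<Rightarrow> (nat set \<Rightarrow> nat) \<Rightarrow> bool" where
  "orientation \<I> Or \<longleftrightarrow> (\<forall>I\<in>\<I>. Or I \<in> I)"

definition acyclic_orientation :: "nat set set \<Rightarrow> (nat set \<Rightarrow> nat) \<Rightarrow> bool" where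
  "acyclic_orientation \<I> Or \<longleftrightarrow>
     \<not> (\<exists>(k::nat) (H::nat \<Rightarrow> nat set). k \<ge> 2 \<and> (\<forall>l\<in>{1..k}. H l \<in> \<I>) \<and>
          (\<forall>l\<in>{1..k-1}. Or (H (l+1)) \<in> H l - {Or (H l)}) \<and>
          Or (H 1) \<in> H k - {Or (H k)})"

definition flip :: "nat set set \<Rightarrow> (nat set \<Rightarrow> nat) \<Rightarrow> nat \<Rightarrow> nat \<Rightarrow> (nat set \<Rightarrow> nat) \<Rightarrow> bool" where
  "flip \<I> Or i j Or2 \<longleftrightarrow>
     i \<noteq> j \<and> (\<exists>H\<in>\<I>. Or H \<noteq> Or2 H) \<and>
     (\<forall>H\<in>\<I>. (Or H \<noteq> Or2 H \<longrightarrow> Or H = i \<and> Or2 H = j) \<and>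
              ({i, j} \<subseteq> H \<longrightarrow> (Or H = i \<longleftrightarrow> Or2 H = j)))"

end

theory Submission
  imports Defs
begin

definition edges :: "nat set set \<Rightarrow> (nat set \<Rightarrow> nat) \<Rightarrow> (nat \<times> nat) set" where
  "edges S Or = {(Or H, b) | H b. H \<in> S \<and> b \<in> H \<and> b \<noteq> Or H}"

definition conv :: "nat set set \<Rightarrow> bool" where
  "conv S \<longleftrightarrow> (\<forall>H\<in>S. \<forall>x\<in>H. \<forall>y\<in>H. \<forall>z. x \<le> z \<and> z \<le> y \<longrightarrow> z \<in> H)"

lemma edges_irrefl: "(a,a) \<notin> edges S Or"
  unfolding edges_def by auto

lemma seq_trancl:
  fixes k :: nat
  assumes "\<forall>l\<in>{1..k}. H l \<in> S" "\<forall>l\<in>{1..k-1}. Or (H (l+1)) \<in> H l - {Or (H l)}"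
    "Or (H 1) \<in> H k - {Or (H k)}" "k \<ge> 1"
  shows "(Or (H 1), Or (H 1)) \<in> (edges S Or)\<^sup>+"
proof -
  have "m \<ge> 1 \<Longrightarrow> m \<le> k \<Longrightarrow> (Or (H 1), Or (H m)) \<in> (edges S Or)\<^sup>*" for m
  proof (induction m)
    case 0 then show ?case by simp
  next
    case (Suc m)
    show ?case
    proof (cases "m = 0")
      case True then show ?thesis by simp
    next
      case False
      then have "(Or (H 1), Or (H m)) \<in> (edges S Or)\<^sup>*" using Suc by auto
      moreover have "(Or (H m), Or (H (Suc m))) \<in> edges S Or"
      proof -
        have m1: "m \<in> {1..k-1}" using Suc.prems False by auto
        then have "m \<in> {1..k}" by auto
        then have "H m \<in> S" using assms(1) by blast
        moreover have "Or (H (m+1)) \<in> H m - {Or (H m)}" using assms(2) m1 by blast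
        ultimately show ?thesis unfolding edges_def by auto
      qed
      ultimately show ?thesis by (rule rtrancl_into_rtrancl)
    qed
  qed
  from this[of k] assms(4) have "(Or (H 1), Or (H k)) \<in> (edges S Or)\<^sup>*" by simp
  moreover have "(Or (H k), Or (H 1)) \<in> edges S Or"
    using assms(1,3,4) unfolding edges_def by auto
  ultimately show ?thesis by (rule rtrancl_into_trancl1)
qed

lemma trancl_seq:
  assumes "(x,y) \<in> (edges S Or)\<^sup>+"
  shows "\<exists>(k::nat) H. k \<ge> 1 \<and> (\<forall>l\<in>{1..k}. H l \<in> S) \<and> (\<forall>l\<in>{1..k-1}. Or (H (l+1)) \<in> H l - {Or (H l)})
     \<and> Or (H 1) = x \<and> y \<in> H k - {Or (H k)}"
  using assms
proof (induction rule: trancl_induct)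
  case (base y)
  then obtain H' where "H' \<in> S" "x = Or H'" "y \<in> H'" "y \<noteq> Or H'" unfolding edges_def by auto
  then show ?case by (intro exI[of _ "1::nat"] exI[of _ "\<lambda>_. H'"]) auto
next
  case (step y z)
  then obtain k :: nat and H where k: "k \<ge> 1" "\<forall>l\<in>{1..k}. H l \<in> S" "\<forall>l\<in>{1..k-1}. Or (H (l+1)) \<in> H l - {Or (H l)}"
     "Or (H 1) = x" "y \<in> H k - {Or (H k)}" by blast
  from step obtain H' where H': "H' \<in> S" "y = Or H'" "z \<in> H'" "z \<noteq> Or H'" unfolding edges_def by auto
  define H2 where "H2 = H(k+1 := H')"
  have "\<forall>l\<in>{1..k+1}. H2 l \<in> S" using k H' unfolding H2_def by auto
  moreover have "\<forall>l\<in>{1..k+1-1}. Or (H2 (l+1)) \<in> H2 l - {Or (H2 l)}"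
  proof
    fix l assume l: "l \<in> {1..k+1-1}"
    show "Or (H2 (l+1)) \<in> H2 l - {Or (H2 l)}"
    proof (cases "l = k")
      case True then show ?thesis using k H' unfolding H2_def by auto
    next
      case False then show ?thesis using k l unfolding H2_def by auto
    qed
  qed
  moreover have "Or (H2 1) = x" "z \<in> H2 (k+1) - {Or (H2 (k+1))}" using k H' unfolding H2_def by auto
  ultimately show ?case using k(1) by (intro exI[of _ "k+1"] exI[of _ H2]) auto
qed

lemma acyc_iff: "acyclic_orientation S Or \<longleftrightarrow> (\<forall>x. (x,x) \<notin> (edges S Or)\<^sup>+)"
proof
  assume a: "acyclic_orientation S Or"
  show "\<forall>x. (x,x) \<notin> (edges S Or)\<^sup>+"
  proof (intro allI notI)
    fix x assume "(x,x) \<in> (edges S Or)\<^sup>+"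
    from trancl_seq[OF this] obtain k :: nat and H where k: "k \<ge> 1" "\<forall>l\<in>{1..k}. H l \<in> S" "\<forall>l\<in>{1..k-1}. Or (H (l+1)) \<in> H l - {Or (H l)}"
     "Or (H 1) = x" "x \<in> H k - {Or (H k)}" by blast
    have "k \<noteq> 1" using k by auto
    with k have "k \<ge> 2" by auto
    with k a show False unfolding acyclic_orientation_def by blast
  qed
next
  assume a: "\<forall>x. (x,x) \<notin> (edges S Or)\<^sup>+"
  show "acyclic_orientation S Or" unfolding acyclic_orientation_def
  proof
    assume "\<exists>(k::nat) (H::nat \<Rightarrow> nat set). k \<ge> 2 \<and> (\<forall>l\<in>{1..k}. H l \<in> S) \<and>
          (\<forall>l\<in>{1..k-1}. Or (H (l+1)) \<in> H l - {Or (H l)}) \<and> Or (H 1) \<in> H k - {Or (H k)}"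
    then obtain k :: nat and H where "k \<ge> 2" "\<forall>l\<in>{1..k}. H l \<in> S" "\<forall>l\<in>{1..k-1}. Or (H (l+1)) \<in> H l - {Or (H l)}"
      "Or (H 1) \<in> H k - {Or (H k)}" by blast
    from seq_trancl[OF this(2,3,4)] \<open>k \<ge> 2\<close> a show False by auto
  qed
qed


lemma edge_between:
  assumes "(a,b) \<in> edges S Or" "conv S" "\<forall>H\<in>S. Or H \<in> H"
    "a \<le> c \<and> c \<le> b \<or> b \<le> c \<and> c \<le> a" "c \<noteq> a"
  shows "(a,c) \<in> edges S Or"
proof -
  from assms(1) obtain H where H: "H \<in> S" "a = Or H" "b \<in> H" "b \<noteq> Or H" unfolding edges_def by auto
  have "Or H \<in> H" using assms(3) H by auto
  then have "c \<in> H" using assms(2,4) H unfolding conv_def by metis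
  then show ?thesis using H assms(5) unfolding edges_def by auto
qed

lemma cross_up:
  assumes "(w,y) \<in> (edges S Or)\<^sup>+" "conv S" "\<forall>H\<in>S. Or H \<in> H"
  shows "w < x \<Longrightarrow> x \<le> y \<Longrightarrow> \<exists>a. a < x \<and> (w,a) \<in> (edges S Or)\<^sup>* \<and> (a,x) \<in> edges S Or"
  using assms(1)
proof (induction rule: converse_trancl_induct)
  case (base w)
  then show ?case using edge_between[OF base(1) assms(2,3), of x] by auto
next
  case (step w w')
  show ?case
  proof (cases "w' < x")
    case True
    then obtain a where "a < x" "(w',a) \<in> (edges S Or)\<^sup>*" "(a,x) \<in> edges S Or" using step by auto
    then show ?thesis using step(1) by (meson converse_rtrancl_into_rtrancl)
  next
    case False
    then show ?thesis using edge_between[OF step(1) assms(2,3), of x] step by auto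
  qed
qed

lemma cross_down:
  assumes "(w,y) \<in> (edges S Or)\<^sup>+" "conv S" "\<forall>H\<in>S. Or H \<in> H"
  shows "x < w \<Longrightarrow> y \<le> x \<Longrightarrow> \<exists>a. x < a \<and> (w,a) \<in> (edges S Or)\<^sup>* \<and> (a,x) \<in> edges S Or"
  using assms(1)
proof (induction rule: converse_trancl_induct)
  case (base w)
  then show ?case using edge_between[OF base(1) assms(2,3), of x] by auto
next
  case (step w w')
  show ?case
  proof (cases "x < w'")
    case True
    then obtain a where "x < a" "(w',a) \<in> (edges S Or)\<^sup>*" "(a,x) \<in> edges S Or" using step by auto
    then show ?thesis using step(1) by (meson converse_rtrancl_into_rtrancl)
  next
    case False
    then show ?thesis using edge_between[OF step(1) assms(2,3), of x] step by auto
  qed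
qed

lemma mono_up:
  assumes "(x,y) \<in> (edges S Or)\<^sup>+" "conv S" "\<forall>H\<in>S. Or H \<in> H" "\<forall>z. (z,z) \<notin> (edges S Or)\<^sup>+"
  shows "x < y \<Longrightarrow> \<exists>u. x \<le> u \<and> u < y \<and> (x,u) \<in> (edges S Or)\<^sup>* \<and> (u,y) \<in> edges S Or"
  using assms(1)
proof (induction rule: converse_trancl_induct)
  case (base x)
  then show ?case by auto
next
  case (step x w)
  have "w \<noteq> x" using step(1) edges_irrefl by metis
  consider "w < x" | "x < w \<and> w < y" | "w = y" | "y < w" using \<open>w \<noteq> x\<close> by linarith
  then show ?case
  proof cases
    case 1
    obtain a where a: "a < x" "(w,a) \<in> (edges S Or)\<^sup>*" "(a,x) \<in> edges S Or"
      using cross_up[OF step(2) assms(2,3) 1] step(4) by auto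
    have "(x,a) \<in> (edges S Or)\<^sup>*" using step(1) a(2) by (meson converse_rtrancl_into_rtrancl)
    then have "(x,x) \<in> (edges S Or)\<^sup>+" using a(3) by (rule rtrancl_into_trancl1)
    then show ?thesis using assms(4) by auto
  next
    case 2
    then obtain u where "w \<le> u" "u < y" "(w,u) \<in> (edges S Or)\<^sup>*" "(u,y) \<in> edges S Or" using step by auto
    then show ?thesis using step(1) 2 by (meson converse_rtrancl_into_rtrancl less_imp_le order_trans)
  next
    case 3 then show ?thesis using step by auto
  next
    case 4 then show ?thesis using edge_between[OF step(1) assms(2,3), of y] step by auto
  qed
qed

lemma mono_down:
  assumes "(x,y) \<in> (edges S Or)\<^sup>+" "conv S" "\<forall>H\<in>S. Or H \<in> H" "\<forall>z. (z,z) \<notin> (edges S Or)\<^sup>+"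
  shows "y < x \<Longrightarrow> \<exists>u. y < u \<and> u \<le> x \<and> (x,u) \<in> (edges S Or)\<^sup>* \<and> (u,y) \<in> edges S Or"
  using assms(1)
proof (induction rule: converse_trancl_induct)
  case (base x)
  then show ?case by auto
next
  case (step x w)
  have "w \<noteq> x" using step(1) edges_irrefl by metis
  consider "x < w" | "y < w \<and> w < x" | "w = y" | "w < y" using \<open>w \<noteq> x\<close> by linarith
  then show ?case
  proof cases
    case 1
    obtain a where a: "x < a" "(w,a) \<in> (edges S Or)\<^sup>*" "(a,x) \<in> edges S Or"
      using cross_down[OF step(2) assms(2,3) 1] step(4) by auto
    have "(x,a) \<in> (edges S Or)\<^sup>*" using step(1) a(2) by (meson converse_rtrancl_into_rtrancl)
    then have "(x,x) \<in> (edges S Or)\<^sup>+" using a(3) by (rule rtrancl_into_trancl1)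
    then show ?thesis using assms(4) by auto
  next
    case 2
    then obtain u where "y < u" "u \<le> w" "(w,u) \<in> (edges S Or)\<^sup>*" "(u,y) \<in> edges S Or" using step by auto
    then show ?thesis using step(1) 2 by (meson converse_rtrancl_into_rtrancl less_imp_le order_trans)
  next
    case 3 then show ?thesis using step by auto
  next
    case 4 then show ?thesis using edge_between[OF step(1) assms(2,3), of y] step by auto
  qed
qed

lemma decomp:
  assumes "(x,y) \<in> (R \<union> N)\<^sup>+" "\<forall>a b. (a,b) \<in> N \<longrightarrow> a = j"
  shows "(x,y) \<in> R\<^sup>+ \<or> ((x,j) \<in> (R \<union> N)\<^sup>* \<and> (\<exists>v. (j,v) \<in> N \<and> (v,y) \<in> R\<^sup>*))"
  using assms(1)
proof (induction rule: trancl_induct)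
  case (base y)
  then show ?case using assms(2) by blast
next
  case (step y z)
  from step(2) show ?case
  proof
    assume "(y,z) \<in> R"
    with step(3) show ?thesis by (meson rtrancl.rtrancl_into_rtrancl trancl.trancl_into_trancl)
  next
    assume "(y,z) \<in> N"
    then have "y = j" using assms(2) by blast
    then show ?thesis using step(1) \<open>(y,z) \<in> N\<close> by auto
  qed
qed

lemma cycle_through:
  assumes "(x,x) \<in> (R \<union> N)\<^sup>+" "\<forall>a b. (a,b) \<in> N \<longrightarrow> a = j" "\<forall>z. (z,z) \<notin> R\<^sup>+"
  shows "\<exists>v. (j,v) \<in> N \<and> (v,j) \<in> R\<^sup>*"
proof -
  from decomp[OF assms(1,2)] assms(3) obtain v where v: "(x,j) \<in> (R \<union> N)\<^sup>*" "(j,v) \<in> N" "(v,x) \<in> R\<^sup>*"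
    by blast
  have "(v,x) \<in> (R \<union> N)\<^sup>*" using v(3) by (meson Un_upper1 rtrancl_mono subsetD)
  then have "(v,j) \<in> (R \<union> N)\<^sup>*" using v(1) by auto
  moreover have "(j,v) \<in> (R \<union> N)" using v(2) by blast
  ultimately have "(j,j) \<in> (R \<union> N)\<^sup>+" by (meson rtrancl_into_trancl2)
  from decomp[OF this assms(2)] assms(3) show ?thesis by blast
qed


lemma edgesI: "H \<in> S \<Longrightarrow> b \<in> H \<Longrightarrow> b \<noteq> Or H \<Longrightarrow> Or H = a \<Longrightarrow> (a,b) \<in> edges S Or"
  unfolding edges_def by auto

lemma edgesE: "(a,b) \<in> edges S Or \<Longrightarrow> (\<And>H. H \<in> S \<Longrightarrow> b \<in> H \<Longrightarrow> b \<noteq> Or H \<Longrightarrow> Or H = a \<Longrightarrow> P) \<Longrightarrow> P"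
  unfolding edges_def by auto

lemma edges_mono: "S \<subseteq> T \<Longrightarrow> edges S Or \<subseteq> edges T Or"
  unfolding edges_def by auto

lemma ih_facts:
  assumes "interval_hypergraph n \<I>" "H \<in> \<I>"
  shows "finite H" "H \<noteq> {}" "H \<subseteq> {1..n}" "\<And>x y z. x \<in> H \<Longrightarrow> y \<in> H \<Longrightarrow> x \<le> z \<Longrightarrow> z \<le> y \<Longrightarrow> z \<in> H"
proof -
  obtain a b where ab: "1 \<le> a" "a \<le> b" "b \<le> n" "H = {a..b}"
    using assms unfolding interval_hypergraph_def is_interval_def by blast
  show "finite H" "H \<noteq> {}" "H \<subseteq> {1..n}" using ab by auto
  show "\<And>x y z. x \<in> H \<Longrightarrow> y \<in> H \<Longrightarrow> x \<le> z \<Longrightarrow> z \<le> y \<Longrightarrow> z \<in> H" using ab by auto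
qed

lemma ih_conv: "interval_hypergraph n \<I> \<Longrightarrow> S \<subseteq> \<I> \<Longrightarrow> conv S"
  unfolding conv_def using ih_facts(4) by blast

lemma flipB:
  assumes "orientation \<I> A" "orientation \<I> B" "flip \<I> A i j B" "H \<in> \<I>"
  shows "B H = (if A H = i \<and> j \<in> H then j else A H)"
  using assms unfolding orientation_def flip_def by (metis empty_subsetI insert_subset)

lemma part1:
  assumes hyp: "interval_hypergraph n \<I>"
    and orA: "orientation \<I> A"
    and acA: "acyclic_orientation \<I> A"
    and ij: "i \<in> {1..n}" "j \<in> {1..n}" "i < j"
    and orB: "orientation \<I> B" and fl: "flip \<I> A i j B"
  shows "acyclic_orientation \<I> B \<longleftrightarrow>
         \<not> (\<exists>J\<in>\<I>. j \<in> J - {A J} \<and> A J \<in> {i<..Max {Max I | I. I \<in> \<I> \<and> A I = i}})"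
proof -
  define M where "M = {Max I | I. I \<in> \<I> \<and> A I = i}"
  define k where "k = Max M"
  have oA: "\<forall>H\<in>\<I>. A H \<in> H" using orA unfolding orientation_def by auto
  have oB: "\<forall>H\<in>\<I>. B H \<in> H" using orB unfolding orientation_def by auto
  have finM: "finite M"
  proof (rule finite_subset)
    show "M \<subseteq> {..n}"
    proof
      fix m assume "m \<in> M"
      then obtain I where I: "I \<in> \<I>" "m = Max I" unfolding M_def by blast
      have "Max I \<in> I" using ih_facts(1,2)[OF hyp I(1)] by (rule Max_in)
      then show "m \<in> {..n}" using ih_facts(3)[OF hyp I(1)] I(2) by auto
    qed
  qed auto
  have si: "{i} \<in> \<I>" using hyp ij unfolding interval_hypergraph_def by auto
  then have "A {i} = i" using oA by auto
  then have "Max {i} \<in> M" unfolding M_def using si by blast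
  then have Mne: "M \<noteq> {}" by auto
  have maxle: "x \<le> k" if "H \<in> \<I>" "A H = i" "x \<in> H" for H x
  proof -
    have "x \<le> Max H" using ih_facts(1)[OF hyp that(1)] that(3) by auto
    also have "Max H \<le> k" unfolding k_def using finM that unfolding M_def by (auto intro: Max_ge)
    finally show ?thesis .
  qed
  obtain I0 where I0: "I0 \<in> \<I>" "A I0 = i" "Max I0 = k"
  proof -
    have "k \<in> M" unfolding k_def using Max_in[OF finM Mne] .
    then show ?thesis using that unfolding M_def by blast
  qed
  have fB: "\<And>H. H \<in> \<I> \<Longrightarrow> B H = (if A H = i \<and> j \<in> H then j else A H)"
    using flipB[OF orA orB fl] by blast
  have acAE: "\<forall>z. (z,z) \<notin> (edges \<I> A)\<^sup>+" using acA acyc_iff by blast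
  have "(\<exists>x. (x,x) \<in> (edges \<I> B)\<^sup>+) \<longleftrightarrow> (\<exists>J\<in>\<I>. j \<in> J - {A J} \<and> A J \<in> {i<..k})"
  proof
    assume "\<exists>x. (x,x) \<in> (edges \<I> B)\<^sup>+"
    then obtain x where x: "(x,x) \<in> (edges \<I> B)\<^sup>+" by blast
    define I' where "I' = {H\<in>\<I>. \<not> (A H = i \<and> j \<in> H)}"
    define R where "R = edges I' A"
    define N where "N = {(j,b) | H b. H \<in> \<I> \<and> A H = i \<and> j \<in> H \<and> b \<in> H \<and> b \<noteq> j}"
    have sub: "edges \<I> B \<subseteq> R \<union> N"
    proof
      fix e assume "e \<in> edges \<I> B"
      then obtain H b where Hb: "e = (B H, b)" "H \<in> \<I>" "b \<in> H" "b \<noteq> B H" unfolding edges_def by auto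
      show "e \<in> R \<union> N"
      proof (cases "A H = i \<and> j \<in> H")
        case True then show ?thesis using Hb fB[OF Hb(2)] unfolding N_def by auto
      next
        case False then show ?thesis using Hb fB[OF Hb(2)] unfolding R_def I'_def edges_def by auto
      qed
    qed
    have x2: "(x,x) \<in> (R \<union> N)\<^sup>+" using trancl_mono[OF x sub] .
    have RA: "R \<subseteq> edges \<I> A" unfolding R_def I'_def by (rule edges_mono) auto
    have acR: "\<forall>z. (z,z) \<notin> R\<^sup>+" using acAE trancl_mono[OF _ RA] by blast
    have Nj: "\<forall>a b. (a,b) \<in> N \<longrightarrow> a = j" unfolding N_def by auto
    obtain v where v: "(j,v) \<in> N" "(v,j) \<in> R\<^sup>*" using cycle_through[OF x2 Nj acR] by blast
    then obtain H where H: "H \<in> \<I>" "A H = i" "j \<in> H" "v \<in> H" "v \<noteq> j" unfolding N_def by auto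
    have vj: "(v,j) \<in> R\<^sup>+" using v(2) H(5) by (meson rtranclD)
    have cI': "conv I'" using ih_conv[OF hyp] unfolding I'_def by auto
    have oI': "\<forall>H\<in>I'. A H \<in> H" using oA unfolding I'_def by auto
    have acR': "\<forall>z. (z,z) \<notin> (edges I' A)\<^sup>+" using acR unfolding R_def .
    have vj': "(v,j) \<in> (edges I' A)\<^sup>+" using vj unfolding R_def .
    have jk: "j \<le> k" using maxle[OF H(1,2,3)] .
    have vk: "v \<le> k" using maxle[OF H(1,2,4)] .
    have witness: "\<exists>J\<in>\<I>. j \<in> J - {A J} \<and> A J \<in> {i<..k}"
      if u: "(u,j) \<in> edges I' A" "i < u" "u \<le> k" for u
    proof -
      from u(1) obtain J where J: "J \<in> I'" "j \<in> J" "j \<noteq> A J" "A J = u" by (rule edgesE)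
      then show ?thesis using u unfolding I'_def by auto
    qed
    show "\<exists>J\<in>\<I>. j \<in> J - {A J} \<and> A J \<in> {i<..k}"
    proof (cases "v < j")
      case True
      obtain u where u: "v \<le> u" "u < j" "(v,u) \<in> (edges I' A)\<^sup>*" "(u,j) \<in> edges I' A"
        using mono_up[OF vj' cI' oI' acR' True] by blast
      from u(4) obtain J where J: "J \<in> I'" "j \<in> J" "j \<noteq> A J" "A J = u" by (rule edgesE)
      have ui: "u \<noteq> i" using J unfolding I'_def by auto
      have "i < u"
      proof (rule ccontr)
        assume "\<not> i < u"
        then have ui2: "u < i" using ui by auto
        have JI: "J \<in> \<I>" using J unfolding I'_def by auto
        have "i \<in> J" using ih_facts(4)[OF hyp JI, of u j i] oA JI J ui2 ij(3) by auto
        then have e1: "(u,i) \<in> edges \<I> A" using JI J ui2 by (intro edgesI) auto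
        have e2: "(i,v) \<in> edges \<I> A" using H u(1) ui2 by (intro edgesI) auto
        have "(v,u) \<in> (edges \<I> A)\<^sup>*" using rtrancl_mono[OF edges_mono[of I' \<I>]] u(3) unfolding I'_def by blast
        then have "(i,u) \<in> (edges \<I> A)\<^sup>*" using e2 by (meson converse_rtrancl_into_rtrancl)
        then have "(i,i) \<in> (edges \<I> A)\<^sup>+" using e1 by (rule rtrancl_into_trancl1)
        then show False using acAE by blast
      qed
      then show ?thesis using witness[OF u(4)] u(2) jk by auto
    next
      case False
      then have "j < v" using H(5) by auto
      then obtain u where u: "j < u" "u \<le> v" "(v,u) \<in> (edges I' A)\<^sup>*" "(u,j) \<in> edges I' A"
        using mono_down[OF vj' cI' oI' acR'] by blast
      then show ?thesis using witness[OF u(4)] ij(3) vk by auto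
    qed
  next
    assume "\<exists>J\<in>\<I>. j \<in> J - {A J} \<and> A J \<in> {i<..k}"
    then obtain J where J: "J \<in> \<I>" "j \<in> J" "j \<noteq> A J" "i < A J" "A J \<le> k" by auto
    define a where "a = A J"
    have BJ: "B J = a" using fB[OF J(1)] J(4) unfolding a_def by auto
    have e1: "(a,j) \<in> edges \<I> B" using J BJ unfolding a_def by (intro edgesI) auto
    have iI0: "i \<in> I0" using oA I0 by auto
    have kI0: "k \<in> I0" using I0 ih_facts(1,2)[OF hyp I0(1)] Max_in by metis
    have aI0: "a \<in> I0" using ih_facts(4)[OF hyp I0(1) iI0 kI0] J unfolding a_def by auto
    show "\<exists>x. (x,x) \<in> (edges \<I> B)\<^sup>+"
    proof (cases "j \<in> I0")
      case True
      then have "B I0 = j" using fB[OF I0(1)] I0 by auto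
      then have "(j,a) \<in> edges \<I> B" using aI0 I0 J unfolding a_def by (intro edgesI) auto
      then have "(j,j) \<in> (edges \<I> B)\<^sup>+" using e1 by auto
      then show ?thesis by blast
    next
      case False
      then have "B I0 = i" using fB[OF I0(1)] I0 by auto
      then have e2: "(i,a) \<in> edges \<I> B" using aI0 I0 J unfolding a_def by (intro edgesI) auto
      obtain H where H: "H \<in> \<I>" "A H \<noteq> B H" using fl unfolding flip_def by blast
      then have HH: "A H = i" "j \<in> H" "B H = j" using fB[OF H(1)] by (auto split: if_splits)
      have "i \<in> H" using oA H HH by metis
      then have e3: "(j,i) \<in> edges \<I> B" using H HH ij(3) by (intro edgesI) auto
      have "(j,j) \<in> (edges \<I> B)\<^sup>+" using e1 e2 e3 by (meson trancl.trancl_into_trancl r_into_trancl)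
      then show ?thesis by blast
    qed
  qed
  then show ?thesis unfolding acyc_iff k_def M_def by blast
qed

lemma part2:
  assumes hyp: "interval_hypergraph n \<I>"
    and orA: "orientation \<I> A"
    and acA: "acyclic_orientation \<I> A"
    and ij: "i \<in> {1..n}" "j \<in> {1..n}" "j < i"
    and orB: "orientation \<I> B" and fl: "flip \<I> A i j B"
  shows "acyclic_orientation \<I> B \<longleftrightarrow>
         \<not> (\<exists>J\<in>\<I>. j \<in> J - {A J} \<and> A J \<in> {Min {Min I | I. I \<in> \<I> \<and> A I = i}..<i})"
proof -
  define M where "M = {Min I | I. I \<in> \<I> \<and> A I = i}"
  define k where "k = Min M"
  have oA: "\<forall>H\<in>\<I>. A H \<in> H" using orA unfolding orientation_def by auto
  have oB: "\<forall>H\<in>\<I>. B H \<in> H" using orB unfolding orientation_def by auto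
  have finM: "finite M"
  proof (rule finite_subset)
    show "M \<subseteq> {..n}"
    proof
      fix m assume "m \<in> M"
      then obtain I where I: "I \<in> \<I>" "m = Min I" unfolding M_def by blast
      have "Min I \<in> I" using ih_facts(1,2)[OF hyp I(1)] by (rule Min_in)
      then show "m \<in> {..n}" using ih_facts(3)[OF hyp I(1)] I(2) by auto
    qed
  qed auto
  have si: "{i} \<in> \<I>" using hyp ij unfolding interval_hypergraph_def by auto
  then have "A {i} = i" using oA by auto
  then have "Min {i} \<in> M" unfolding M_def using si by blast
  then have Mne: "M \<noteq> {}" by auto
  have maxle: "k \<le> x" if "H \<in> \<I>" "A H = i" "x \<in> H" for H x
  proof -
    have "k \<le> Min H" unfolding k_def using finM that unfolding M_def by (auto intro: Min_le)
    also have "Min H \<le> x" using ih_facts(1)[OF hyp that(1)] that(3) by auto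
    finally show ?thesis .
  qed
  obtain I0 where I0: "I0 \<in> \<I>" "A I0 = i" "Min I0 = k"
  proof -
    have "k \<in> M" unfolding k_def using Min_in[OF finM Mne] .
    then show ?thesis using that unfolding M_def by blast
  qed
  have fB: "\<And>H. H \<in> \<I> \<Longrightarrow> B H = (if A H = i \<and> j \<in> H then j else A H)"
    using flipB[OF orA orB fl] by blast
  have acAE: "\<forall>z. (z,z) \<notin> (edges \<I> A)\<^sup>+" using acA acyc_iff by blast
  have "(\<exists>x. (x,x) \<in> (edges \<I> B)\<^sup>+) \<longleftrightarrow> (\<exists>J\<in>\<I>. j \<in> J - {A J} \<and> A J \<in> {k..<i})"
  proof
    assume "\<exists>x. (x,x) \<in> (edges \<I> B)\<^sup>+"
    then obtain x where x: "(x,x) \<in> (edges \<I> B)\<^sup>+" by blast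
    define I' where "I' = {H\<in>\<I>. \<not> (A H = i \<and> j \<in> H)}"
    define R where "R = edges I' A"
    define N where "N = {(j,b) | H b. H \<in> \<I> \<and> A H = i \<and> j \<in> H \<and> b \<in> H \<and> b \<noteq> j}"
    have sub: "edges \<I> B \<subseteq> R \<union> N"
    proof
      fix e assume "e \<in> edges \<I> B"
      then obtain H b where Hb: "e = (B H, b)" "H \<in> \<I>" "b \<in> H" "b \<noteq> B H" unfolding edges_def by auto
      show "e \<in> R \<union> N"
      proof (cases "A H = i \<and> j \<in> H")
        case True then show ?thesis using Hb fB[OF Hb(2)] unfolding N_def by auto
      next
        case False then show ?thesis using Hb fB[OF Hb(2)] unfolding R_def I'_def edges_def by auto
      qed
    qed
    have x2: "(x,x) \<in> (R \<union> N)\<^sup>+" using trancl_mono[OF x sub] .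
    have RA: "R \<subseteq> edges \<I> A" unfolding R_def I'_def by (rule edges_mono) auto
    have acR: "\<forall>z. (z,z) \<notin> R\<^sup>+" using acAE trancl_mono[OF _ RA] by blast
    have Nj: "\<forall>a b. (a,b) \<in> N \<longrightarrow> a = j" unfolding N_def by auto
    obtain v where v: "(j,v) \<in> N" "(v,j) \<in> R\<^sup>*" using cycle_through[OF x2 Nj acR] by blast
    then obtain H where H: "H \<in> \<I>" "A H = i" "j \<in> H" "v \<in> H" "v \<noteq> j" unfolding N_def by auto
    have vj: "(v,j) \<in> R\<^sup>+" using v(2) H(5) by (meson rtranclD)
    have cI': "conv I'" using ih_conv[OF hyp] unfolding I'_def by auto
    have oI': "\<forall>H\<in>I'. A H \<in> H" using oA unfolding I'_def by auto
    have acR': "\<forall>z. (z,z) \<notin> (edges I' A)\<^sup>+" using acR unfolding R_def .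
    have vj': "(v,j) \<in> (edges I' A)\<^sup>+" using vj unfolding R_def .
    have jk: "k \<le> j" using maxle[OF H(1,2,3)] .
    have vk: "k \<le> v" using maxle[OF H(1,2,4)] .
    have witness: "\<exists>J\<in>\<I>. j \<in> J - {A J} \<and> A J \<in> {k..<i}"
      if u: "(u,j) \<in> edges I' A" "k \<le> u" "u < i" for u
    proof -
      from u(1) obtain J where J: "J \<in> I'" "j \<in> J" "j \<noteq> A J" "A J = u" by (rule edgesE)
      then show ?thesis using u unfolding I'_def by auto
    qed
    show "\<exists>J\<in>\<I>. j \<in> J - {A J} \<and> A J \<in> {k..<i}"
    proof (cases "v < j")
      case True
      obtain u where u: "v \<le> u" "u < j" "(v,u) \<in> (edges I' A)\<^sup>*" "(u,j) \<in> edges I' A"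
        using mono_up[OF vj' cI' oI' acR' True] by blast
      then show ?thesis using witness[OF u(4)] ij(3) vk by auto
    next
      case False
      then have "j < v" using H(5) by auto
      then obtain u where u: "j < u" "u \<le> v" "(v,u) \<in> (edges I' A)\<^sup>*" "(u,j) \<in> edges I' A"
        using mono_down[OF vj' cI' oI' acR'] by blast
      from u(4) obtain J where J: "J \<in> I'" "j \<in> J" "j \<noteq> A J" "A J = u" by (rule edgesE)
      have ui: "u \<noteq> i" using J unfolding I'_def by auto
      have "u < i"
      proof (rule ccontr)
        assume "\<not> u < i"
        then have ui2: "i < u" using ui by auto
        have JI: "J \<in> \<I>" using J unfolding I'_def by auto
        have "i \<in> J" using ih_facts(4)[OF hyp JI, of j u i] oA JI J ui2 ij(3) by auto
        then have e1: "(u,i) \<in> edges \<I> A" using JI J ui2 by (intro edgesI) auto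
        have e2: "(i,v) \<in> edges \<I> A" using H u(2) ui2 by (intro edgesI) auto
        have "(v,u) \<in> (edges \<I> A)\<^sup>*" using rtrancl_mono[OF edges_mono[of I' \<I>]] u(3) unfolding I'_def by blast
        then have "(i,u) \<in> (edges \<I> A)\<^sup>*" using e2 by (meson converse_rtrancl_into_rtrancl)
        then have "(i,i) \<in> (edges \<I> A)\<^sup>+" using e1 by (rule rtrancl_into_trancl1)
        then show False using acAE by blast
      qed
      then show ?thesis using witness[OF u(4)] u(1) jk by auto
    qed
  next
    assume "\<exists>J\<in>\<I>. j \<in> J - {A J} \<and> A J \<in> {k..<i}"
    then obtain J where J: "J \<in> \<I>" "j \<in> J" "j \<noteq> A J" "k \<le> A J" "A J < i" by auto
    define a where "a = A J"
    have BJ: "B J = a" using fB[OF J(1)] J(5) unfolding a_def by auto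
    have e1: "(a,j) \<in> edges \<I> B" using J BJ unfolding a_def by (intro edgesI) auto
    have iI0: "i \<in> I0" using oA I0 by auto
    have kI0: "k \<in> I0" using I0 ih_facts(1,2)[OF hyp I0(1)] Min_in by metis
    have aI0: "a \<in> I0" using ih_facts(4)[OF hyp I0(1) kI0 iI0] J unfolding a_def by auto
    show "\<exists>x. (x,x) \<in> (edges \<I> B)\<^sup>+"
    proof (cases "j \<in> I0")
      case True
      then have "B I0 = j" using fB[OF I0(1)] I0 by auto
      then have "(j,a) \<in> edges \<I> B" using aI0 I0 J unfolding a_def by (intro edgesI) auto
      then have "(j,j) \<in> (edges \<I> B)\<^sup>+" using e1 by auto
      then show ?thesis by blast
    next
      case False
      then have "B I0 = i" using fB[OF I0(1)] I0 by auto
      then have e2: "(i,a) \<in> edges \<I> B" using aI0 I0 J unfolding a_def by (intro edgesI) auto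
      obtain H where H: "H \<in> \<I>" "A H \<noteq> B H" using fl unfolding flip_def by blast
      then have HH: "A H = i" "j \<in> H" "B H = j" using fB[OF H(1)] by (auto split: if_splits)
      have "i \<in> H" using oA H HH by metis
      then have e3: "(j,i) \<in> edges \<I> B" using H HH ij(3) by (intro edgesI) auto
      have "(j,j) \<in> (edges \<I> B)\<^sup>+" using e1 e2 e3 by (meson trancl.trancl_into_trancl r_into_trancl)
      then show ?thesis by blast
    qed
  qed
  then show ?thesis unfolding acyc_iff k_def M_def by blast
qed


theorem proposition3p15:
  fixes n :: nat and \<I> :: "nat set set" and A :: "nat set \<Rightarrow> nat"
  assumes hyp: "interval_hypergraph n \<I>"
    and orA: "orientation \<I> A"
    and acA: "acyclic_orientation \<I> A"
  shows
   "(\<forall>B i j. i \<in> {1..n} \<longrightarrow> j \<in> {1..n} \<longrightarrow> i < j \<longrightarrow>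
       orientation \<I> B \<longrightarrow> flip \<I> A i j B \<longrightarrow>
       (let k = Max {Max I | I. I \<in> \<I> \<and> A I = i} in
         acyclic_orientation \<I> B \<longleftrightarrow>
         \<not> (\<exists>J\<in>\<I>. j \<in> J - {A J} \<and> A J \<in> {i<..k})))
    \<and>
    (\<forall>B i j. i \<in> {1..n} \<longrightarrow> j \<in> {1..n} \<longrightarrow> j < i \<longrightarrow>
       orientation \<I> B \<longrightarrow> flip \<I> A i j B \<longrightarrow>
       (let k = Min {Min I | I. I \<in> \<I> \<and> A I = i} in
         acyclic_orientation \<I> B \<longleftrightarrow>
         \<not> (\<exists>J\<in>\<I>. j \<in> J - {A J} \<and> A J \<in> {k..<i})))"
  unfolding Let_def using part1[OF hyp orA acA] part2[OF hyp orA acA] by blast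

end
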